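(* Let $n\ge1$ and work in $\mathfrak{gl}(n)$ with the notation of the context, regarding $\mathfrak{gl}(n)$ as an $\mathfrak{sl}(2)$-module (hence a $U(\mathfrak{sl}(2))$-module) via the adjoint action of the principally embedded $\mathfrak{sl}(2)$, and let $\Omega=2YX+\frac12H^2+H\in U(\mathfrak{sl}(2))$. (i) $\Omega$ is self-adjoint with respect to $\langle A,B\rangle=\mathrm{tr}(AB)$, and for $0\le l\le k\le n-1$ the element $X^lf_{kl}(H)$ is an eigenvector of $\Omega$ with eigenvalue $2k(k+1)$. The polynomials $f_{kl}$ satisfy the difference equation $$T_0(H)\nabla\triangle(f)-(l+1)(H+l)\triangle(f)+(k-l)(k+l+1)f=0.$$ (ii) For $0\le l\le k\le n-1$: $f_{kl}=\dfrac{\nabla^{k-l}(T_1\cdots T_k)}{T_1\cdots T_l}$ if $l>0$, and $f_{k0}=\nabla^k(T_1\cdots T_k)$. (iii) $\langle f_{kl},f_{kl}\rangle_l=\dfrac{(k-l)!\,(k!)^2}{(k+l)!\,(2k+1)}\,n(n^2-1^2)\cdots(n^2-k^2)$.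
   Context: Principal embedding: $Y=\sum_{i=1}^{n-1}E_{i+1,i}$, $H=\sum_{i=1}^n(n-2i+1)E_{ii}$, $X=\sum_{i=1}^{n-1}i(n-i)E_{i,i+1}$. Set $\alpha_i=n-2i+1$, $T_i(H)=\frac14(n^2-(H+2i-1)^2)$ for $i\ge0$. For a polynomial $f$, $f(H)=\mathrm{diag}(f(\alpha_1),\dots,f(\alpha_n))$, $\triangle f(H)=f(H+2)-f(H)$, $\nabla f(H)=f(H)-f(H-2)$. For $0\le l\le k\le n-1$, $f_{kl}$ is the unique polynomial of degree $<n-l$ with $(\mathrm{ad}\,Y)^{k-l}(X^k)=X^lf_{kl}(H)$. The form $\langle f,g\rangle_l=\sum_{i=l+1}^n f(\alpha_i)g(\alpha_i)T_1(\alpha_i)\cdots T_l(\alpha_i)$ (empty product $=1$ for $l=0$). *)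

theory Defs
  imports "Jordan_Normal_Form.Matrix" "HOL-Computational_Algebra.Polynomial"
begin

text \<open>Matrices in gl(n) are real n x n matrices (Jordan_Normal_Form, 0-based indices).
  The paper's 1-based index i corresponds to 0-based row/column index i - 1.\<close>

definition alpha :: "nat \<Rightarrow> nat \<Rightarrow> real" where
  "alpha n i = real n - 2 * real i + 1"

definition Ymat :: "nat \<Rightarrow> real mat" where
  "Ymat n = mat n n (\<lambda>(r, c). if r = c + 1 then 1 else 0)"

definition Hmat :: "nat \<Rightarrow> real mat" where
  "Hmat n = mat n n (\<lambda>(r, c). if r = c then alpha n (r + 1) else 0)"

definition Xmat :: "nat \<Rightarrow> real mat" where
  "Xmat n = mat n n (\<lambda>(r, c). if c = r + 1 then real (r + 1) * (real n - real (r + 1)) else 0)"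

definition polyH :: "nat \<Rightarrow> real poly \<Rightarrow> real mat" where
  "polyH n f = mat n n (\<lambda>(r, c). if r = c then poly f (alpha n (r + 1)) else 0)"

definition Tpoly :: "nat \<Rightarrow> nat \<Rightarrow> real poly" where
  "Tpoly n i = smult (1/4) ([:(real n)^2:] - [:2 * real i - 1, 1:] ^ 2)"

definition fwd_diff :: "real poly \<Rightarrow> real poly" where
  "fwd_diff f = pcompose f [:2, 1:] - f"

definition bwd_diff :: "real poly \<Rightarrow> real poly" where
  "bwd_diff f = f - pcompose f [:-2, 1:]"

definition ad :: "real mat \<Rightarrow> real mat \<Rightarrow> real mat" where
  "ad A B = A * B - B * A"

definition mtrace :: "real mat \<Rightarrow> real" where
  "mtrace A = (\<Sum>i<dim_row A. A $$ (i, i))"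

definition Omega :: "nat \<Rightarrow> real mat \<Rightarrow> real mat" where
  "Omega n A = 2 \<cdot>\<^sub>m ad (Ymat n) (ad (Xmat n) A)
              + (1/2) \<cdot>\<^sub>m ad (Hmat n) (ad (Hmat n) A) + ad (Hmat n) A"

definition fkl :: "nat \<Rightarrow> nat \<Rightarrow> nat \<Rightarrow> real poly" where
  "fkl n k l = (THE f. degree f < n - l \<and>
      (ad (Ymat n) ^^ (k - l)) (Xmat n ^\<^sub>m k) = Xmat n ^\<^sub>m l * polyH n f)"

definition ipl :: "nat \<Rightarrow> nat \<Rightarrow> real poly \<Rightarrow> real poly \<Rightarrow> real" where
  "ipl n l f g = (\<Sum>i\<in>{l+1..n}. poly f (alpha n i) * poly g (alpha n i)
                     * (\<Prod>j\<in>{1..l}. poly (Tpoly n j) (alpha n i)))"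

end

theory Submission
  imports Defs
begin

definition tt :: "nat \<Rightarrow> nat \<Rightarrow> real \<Rightarrow> real" where
  "tt n j y = ((real n)^2 - (y + 2 * real j - 1)^2) / 4"

definition PP :: "nat \<Rightarrow> nat \<Rightarrow> real \<Rightarrow> real" where
  "PP n l y = (\<Prod>j\<in>{1..l}. tt n j y)"

lemma poly_T: "poly (Tpoly n j) y = tt n j y"
  by (simp add: Tpoly_def tt_def power2_eq_square algebra_simps)

lemma poly_PT: "poly (\<Prod>j\<in>{1..l}. Tpoly n j) y = PP n l y"
  by (simp add: poly_prod poly_T PP_def)

lemma tt_shift1: "tt n j (y + 2) = tt n (Suc j) y"
  by (simp add: tt_def algebra_simps)

lemma tt_shift2: "tt n (Suc j) (y - 2) = tt n j y"
  by (simp add: tt_def algebra_simps)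

lemma tt_alpha: "tt n j (alpha n i) = (real i - real j) * (real n - real i + real j)"
  unfolding tt_def alpha_def by (simp add: power2_eq_square field_simps) algebra

lemma alpha_Suc: "alpha n (Suc i) = alpha n i - 2"
  by (simp add: alpha_def)

lemma PP_0[simp]: "PP n 0 y = 1" by (simp add: PP_def)

lemma PP_Suc: "PP n (Suc l) y = PP n l y * tt n (Suc l) y"
  by (simp add: PP_def prod.nat_ivl_Suc' mult.commute)

lemma PP_Suc': "PP n (Suc l) y = tt n 1 y * PP n l (y + 2)"
proof (induction l arbitrary: y)
  case 0 then show ?case by (simp add: PP_def)
next
  case (Suc l)
  have "PP n (Suc (Suc l)) y = PP n (Suc l) y * tt n (Suc (Suc l)) y" by (rule PP_Suc)
  also have "\<dots> = tt n 1 y * PP n l (y + 2) * tt n (Suc l) (y + 2)"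
    using Suc by (simp add: tt_shift1)
  also have "\<dots> = tt n 1 y * PP n (Suc l) (y + 2)" by (simp add: PP_Suc)
  finally show ?case .
qed

lemma PP_Suc'': "PP n (Suc l) (y - 2) = tt n 0 y * PP n l y"
proof -
  have "PP n (Suc l) (y - 2) = tt n 1 (y - 2) * PP n l y" using PP_Suc'[of n l "y - 2"] by simp
  moreover have "tt n 1 (y - 2) = tt n 0 y" using tt_shift2[of n 0 y] by simp
  ultimately show ?thesis by simp
qed

lemma PP_alpha_zero1: "1 \<le> l \<Longrightarrow> PP n l (alpha n l) = 0"
  unfolding PP_def by (rule prod_zero) (auto simp: tt_alpha intro!: bexI[of _ l])

lemma PP_alpha_zero2: "1 \<le> l \<Longrightarrow> PP n l (alpha n (n+1)) = 0"
  unfolding PP_def by (rule prod_zero) (auto simp: tt_alpha intro!: bexI[of _ 1])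

lemma PP_alpha_pos: "l < i \<Longrightarrow> i \<le> n \<Longrightarrow> PP n l (alpha n i) > 0"
  unfolding PP_def by (rule prod_pos) (auto simp: tt_alpha)

definition EE :: "nat \<Rightarrow> nat \<Rightarrow> (real \<Rightarrow> real) \<Rightarrow> real mat" where
  "EE n l F = mat n n (\<lambda>(r, c). if c = r + l then F (alpha n (c + 1)) else 0)"

lemma EE_carrier[simp]: "EE n l F \<in> carrier_mat n n" by (simp add: EE_def)
lemma EE_dims[simp]: "dim_row (EE n l F) = n" "dim_col (EE n l F) = n" by (simp_all add: EE_def)
lemma EE_index: "r < n \<Longrightarrow> c < n \<Longrightarrow> EE n l F $$ (r, c) = (if c = r + l then F (alpha n (c + 1)) else 0)"
  by (simp add: EE_def)

lemma X_carrier[simp]: "Xmat n \<in> carrier_mat n n" by (simp add: Xmat_def)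
lemma Y_carrier[simp]: "Ymat n \<in> carrier_mat n n" by (simp add: Ymat_def)
lemma H_carrier[simp]: "Hmat n \<in> carrier_mat n n" by (simp add: Hmat_def)
lemma polyH_carrier[simp]: "polyH n f \<in> carrier_mat n n" by (simp add: polyH_def)
lemma X_dims[simp]: "dim_row (Xmat n) = n" "dim_col (Xmat n) = n" by (simp_all add: Xmat_def)
lemma Y_dims[simp]: "dim_row (Ymat n) = n" "dim_col (Ymat n) = n" by (simp_all add: Ymat_def)
lemma H_dims[simp]: "dim_row (Hmat n) = n" "dim_col (Hmat n) = n" by (simp_all add: Hmat_def)
lemma polyH_dims[simp]: "dim_row (polyH n f) = n" "dim_col (polyH n f) = n" by (simp_all add: polyH_def)

lemma mult_entry: "A \<in> carrier_mat n n \<Longrightarrow> B \<in> carrier_mat n n \<Longrightarrow> i < n \<Longrightarrow> j < n \<Longrightarrow>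
  (A * B) $$ (i, j) = (\<Sum>s<n. A $$ (i, s) * B $$ (s, j))"
  by (auto simp: scalar_prod_def lessThan_atLeast0 intro!: sum.cong)

lemma sum_single: "(\<And>s. s < (n::nat) \<Longrightarrow> s \<noteq> a \<Longrightarrow> f s = 0) \<Longrightarrow> (\<Sum>s<n. f s) = (if a < n then f a else 0)"
proof -
  assume h: "\<And>s. s < n \<Longrightarrow> s \<noteq> a \<Longrightarrow> f s = 0"
  show ?thesis
  proof (cases "a < n")
    case True
    have "(\<Sum>s<n. f s) = f a + (\<Sum>s\<in>{..<n} - {a}. f s)"
      using True by (intro sum.remove) auto
    also have "(\<Sum>s\<in>{..<n} - {a}. f s) = 0" by (rule sum.neutral) (auto simp: h)
    finally show ?thesis using True by simp
  next
    case False
    then show ?thesis by (auto intro!: sum.neutral h)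
  qed
qed

lemma EE_ext: "(\<And>i. l + 1 \<le> i \<Longrightarrow> i \<le> n \<Longrightarrow> F (alpha n i) = G (alpha n i)) \<Longrightarrow> EE n l F = EE n l G"
  by (rule eq_matI) (auto simp: EE_index)

lemma EE_eq_iff: "EE n l F = EE n l G \<longleftrightarrow> (\<forall>i\<in>{l+1..n}. F (alpha n i) = G (alpha n i))"
proof
  assume h: "EE n l F = EE n l G"
  show "\<forall>i\<in>{l+1..n}. F (alpha n i) = G (alpha n i)"
  proof
    fix i assume i: "i \<in> {l+1..n}"
    obtain r where r: "i = r + l + 1" using i by (metis add.commute atLeastAtMost_iff le_Suc_ex Suc_eq_plus1 add_Suc)
    have rn: "r < n" "r + l < n" using i r by auto
    have "EE n l F $$ (r, r + l) = EE n l G $$ (r, r + l)" using h by simp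
    then show "F (alpha n i) = G (alpha n i)" using rn r by (simp add: EE_index)
  qed
next
  assume h: "\<forall>i\<in>{l+1..n}. F (alpha n i) = G (alpha n i)"
  show "EE n l F = EE n l G" by (rule EE_ext) (use h in auto)
qed

lemma EE_add: "EE n l F + EE n l G = EE n l (\<lambda>y. F y + G y)"
  by (rule eq_matI) (auto simp: EE_index)
lemma EE_minus: "EE n l F - EE n l G = EE n l (\<lambda>y. F y - G y)"
  by (rule eq_matI) (auto simp: EE_index)
lemma EE_smult: "a \<cdot>\<^sub>m EE n l F = EE n l (\<lambda>y. a * F y)"
  by (rule eq_matI) (auto simp: EE_index)

lemma EE_polyH: "EE n l F * polyH n f = EE n l (\<lambda>y. F y * poly f y)"
proof (rule eq_matI)
  fix i j assume ij: "i < dim_row (EE n l (\<lambda>y. F y * poly f y))" "j < dim_col (EE n l (\<lambda>y. F y * poly f y))"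
  have "(EE n l F * polyH n f) $$ (i, j) = (\<Sum>s<n. EE n l F $$ (i, s) * polyH n f $$ (s, j))"
    by (rule mult_entry) (use ij in auto)
  also have "\<dots> = (if j < n then EE n l F $$ (i, j) * polyH n f $$ (j, j) else 0)"
    by (rule sum_single) (use ij in \<open>simp add: polyH_def\<close>)
  finally show "(EE n l F * polyH n f) $$ (i, j) = EE n l (\<lambda>y. F y * poly f y) $$ (i, j)"
    using ij by (simp add: EE_index polyH_def)
qed auto

lemma EE_X: "EE n l F * Xmat n = EE n (Suc l) (\<lambda>y. F (y + 2) * tt n 1 y)"
proof (rule eq_matI)
  fix i j assume ij: "i < dim_row (EE n (Suc l) (\<lambda>y. F (y + 2) * tt n 1 y))" "j < dim_col (EE n (Suc l) (\<lambda>y. F (y + 2) * tt n 1 y))"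
  have "(EE n l F * Xmat n) $$ (i, j) = (\<Sum>s<n. EE n l F $$ (i, s) * Xmat n $$ (s, j))"
    by (rule mult_entry) (use ij in auto)
  also have "\<dots> = (if i + l < n then EE n l F $$ (i, i + l) * Xmat n $$ (i + l, j) else 0)"
    by (rule sum_single) (use ij in \<open>simp add: EE_index\<close>)
  also have "\<dots> = EE n (Suc l) (\<lambda>y. F (y + 2) * tt n 1 y) $$ (i, j)"
  proof (cases "j = Suc (i + l)")
    case True
    have n: "i + l < n" "j < n" "i < n" using ij True by auto
    have x: "Xmat n $$ (i + l, j) = real (i + l + 1) * (real n - real (i + l + 1))"
      using n True by (simp add: Xmat_def)
    have e1: "EE n l F $$ (i, i + l) = F (alpha n (i + l + 1))" using n by (simp add: EE_index)
    have e2: "EE n (Suc l) (\<lambda>y. F (y + 2) * tt n 1 y) $$ (i, j) = F (alpha n (j + 1) + 2) * tt n 1 (alpha n (j + 1))"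
      using n True by (simp add: EE_index)
    have t: "tt n 1 (alpha n (j + 1)) = real (i + l + 1) * (real n - real (i + l + 1))"
      unfolding tt_alpha using True by simp
    have a: "alpha n (j + 1) + 2 = alpha n (i + l + 1)" using True by (simp add: alpha_def)
    show ?thesis unfolding e2 t a using n(1) by (simp only: if_True e1 x)
  next
    case False
    have n: "i < n" "j < n" using ij by auto
    have e2: "EE n (Suc l) (\<lambda>y. F (y + 2) * tt n 1 y) $$ (i, j) = 0"
      using n False by (simp add: EE_index)
    have x: "i + l < n \<Longrightarrow> Xmat n $$ (i + l, j) = 0"
      using n False by (simp add: Xmat_def)
    show ?thesis unfolding e2 using x by simp
  qed
  finally show "(EE n l F * Xmat n) $$ (i, j) = EE n (Suc l) (\<lambda>y. F (y + 2) * tt n 1 y) $$ (i, j)" .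
qed auto

lemma Xpow: "Xmat n ^\<^sub>m l = EE n l (PP n l)"
proof (induction l)
  case 0
  show ?case by (rule eq_matI) (auto simp: EE_index)
next
  case (Suc l)
  have "Xmat n ^\<^sub>m Suc l = EE n l (PP n l) * Xmat n" using Suc by simp
  also have "\<dots> = EE n (Suc l) (PP n (Suc l))" unfolding EE_X
    by (rule arg_cong[where f="EE n (Suc l)"]) (auto simp: PP_Suc' mult.commute)
  finally show ?case .
qed

lemma H_EE_entry: "i < n \<Longrightarrow> j < n \<Longrightarrow> (Hmat n * EE n l F) $$ (i, j) = alpha n (i + 1) * EE n l F $$ (i, j)"
proof -
  assume ij: "i < n" "j < n"
  have "(Hmat n * EE n l F) $$ (i, j) = (\<Sum>s<n. Hmat n $$ (i, s) * EE n l F $$ (s, j))"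
    by (rule mult_entry) (use ij in auto)
  also have "\<dots> = (if i < n then Hmat n $$ (i, i) * EE n l F $$ (i, j) else 0)"
    by (rule sum_single) (use ij in \<open>simp add: Hmat_def\<close>)
  finally show ?thesis using ij by (simp add: Hmat_def)
qed

lemma EE_H_entry: "i < n \<Longrightarrow> j < n \<Longrightarrow> (EE n l F * Hmat n) $$ (i, j) = EE n l F $$ (i, j) * alpha n (j + 1)"
proof -
  assume ij: "i < n" "j < n"
  have "(EE n l F * Hmat n) $$ (i, j) = (\<Sum>s<n. EE n l F $$ (i, s) * Hmat n $$ (s, j))"
    by (rule mult_entry) (use ij in auto)
  also have "\<dots> = (if j < n then EE n l F $$ (i, j) * Hmat n $$ (j, j) else 0)"
    by (rule sum_single) (use ij in \<open>simp add: Hmat_def\<close>)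
  finally show ?thesis using ij by (simp add: Hmat_def)
qed

lemma EE_adH: "ad (Hmat n) (EE n l F) = EE n l (\<lambda>y. 2 * real l * F y)"
proof (rule eq_matI)
  fix i j assume ij: "i < dim_row (EE n l (\<lambda>y. 2 * real l * F y))" "j < dim_col (EE n l (\<lambda>y. 2 * real l * F y))"
  then have n: "i < n" "j < n" by auto
  have "ad (Hmat n) (EE n l F) $$ (i, j) = (Hmat n * EE n l F) $$ (i, j) - (EE n l F * Hmat n) $$ (i, j)"
    unfolding ad_def using n by simp
  also have "\<dots> = (alpha n (i + 1) - alpha n (j + 1)) * EE n l F $$ (i, j)"
    unfolding H_EE_entry[OF n] EE_H_entry[OF n] by (simp add: algebra_simps)
  also have "\<dots> = EE n l (\<lambda>y. 2 * real l * F y) $$ (i, j)"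
    using n by (simp add: EE_index alpha_def)
  finally show "ad (Hmat n) (EE n l F) $$ (i, j) = EE n l (\<lambda>y. 2 * real l * F y) $$ (i, j)" .
qed (simp_all add: ad_def)

lemma X_EE: "Xmat n * EE n l F = EE n (Suc l) (\<lambda>y. tt n (Suc l) y * F y)"
proof (rule eq_matI)
  fix i j assume ij: "i < dim_row (EE n (Suc l) (\<lambda>y. tt n (Suc l) y * F y))" "j < dim_col (EE n (Suc l) (\<lambda>y. tt n (Suc l) y * F y))"
  then have n: "i < n" "j < n" by auto
  have "(Xmat n * EE n l F) $$ (i, j) = (\<Sum>s<n. Xmat n $$ (i, s) * EE n l F $$ (s, j))"
    by (rule mult_entry) (use n in auto)
  also have "\<dots> = (if i + 1 < n then Xmat n $$ (i, i + 1) * EE n l F $$ (i + 1, j) else 0)"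
    by (rule sum_single) (use n in \<open>simp add: Xmat_def\<close>)
  also have "\<dots> = EE n (Suc l) (\<lambda>y. tt n (Suc l) y * F y) $$ (i, j)"
  proof (cases "j = i + Suc l")
    case True
    have e2: "EE n (Suc l) (\<lambda>y. tt n (Suc l) y * F y) $$ (i, j) = tt n (Suc l) (alpha n (j + 1)) * F (alpha n (j + 1))"
      using n True by (simp add: EE_index)
    have t: "tt n (Suc l) (alpha n (j + 1)) = real (i + 1) * (real n - real (i + 1))"
      unfolding tt_alpha using True by simp
    have i1: "i + 1 < n" using n True by simp
    have x: "Xmat n $$ (i, i + 1) = real (i + 1) * (real n - real (i + 1))"
      using i1 by (simp add: Xmat_def)
    have e1: "EE n l F $$ (i + 1, j) = F (alpha n (j + 1))" using n i1 True by (simp add: EE_index)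
    show ?thesis unfolding e2 t using i1 by (simp only: if_True e1 x)
  next
    case False
    have e2: "EE n (Suc l) (\<lambda>y. tt n (Suc l) y * F y) $$ (i, j) = 0"
      using n False by (simp add: EE_index)
    have x: "i + 1 < n \<Longrightarrow> EE n l F $$ (i + 1, j) = 0"
      using n False by (simp add: EE_index)
    show ?thesis unfolding e2 using x by simp
  qed
  finally show "(Xmat n * EE n l F) $$ (i, j) = EE n (Suc l) (\<lambda>y. tt n (Suc l) y * F y) $$ (i, j)" .
qed auto

lemma EE_adX: "ad (Xmat n) (EE n l F) = EE n (Suc l) (\<lambda>y. tt n (Suc l) y * F y - F (y + 2) * tt n 1 y)"
  unfolding ad_def X_EE EE_X EE_minus ..

lemma Y_EE: "F (alpha n (Suc l)) = 0 \<Longrightarrow> Ymat n * EE n (Suc l) F = EE n l F"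
proof (rule eq_matI)
  assume F0: "F (alpha n (Suc l)) = 0"
  fix i j assume ij: "i < dim_row (EE n l F)" "j < dim_col (EE n l F)"
  then have n: "i < n" "j < n" by auto
  have "(Ymat n * EE n (Suc l) F) $$ (i, j) = (\<Sum>s<n. Ymat n $$ (i, s) * EE n (Suc l) F $$ (s, j))"
    by (rule mult_entry) (use n in auto)
  also have "\<dots> = (if i - 1 < n then Ymat n $$ (i, i - 1) * EE n (Suc l) F $$ (i - 1, j) else 0)"
    by (rule sum_single) (use n in \<open>auto simp add: Ymat_def\<close>)
  also have "\<dots> = EE n l F $$ (i, j)"
  proof (cases "i = 0")
    case True
    then show ?thesis using n F0 by (simp add: Ymat_def EE_index)
  next
    case False
    then obtain r where r: "i = Suc r" by (cases i) auto
    show ?thesis using n r by (simp add: Ymat_def EE_index)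
  qed
  finally show "(Ymat n * EE n (Suc l) F) $$ (i, j) = EE n l F $$ (i, j)" .
qed auto

lemma EE_Y: "F (alpha n (n + 1)) = 0 \<Longrightarrow> EE n (Suc l) F * Ymat n = EE n l (\<lambda>y. F (y - 2))"
proof (rule eq_matI)
  assume F0: "F (alpha n (n + 1)) = 0"
  fix i j assume ij: "i < dim_row (EE n l (\<lambda>y. F (y - 2)))" "j < dim_col (EE n l (\<lambda>y. F (y - 2)))"
  then have n: "i < n" "j < n" by auto
  have "(EE n (Suc l) F * Ymat n) $$ (i, j) = (\<Sum>s<n. EE n (Suc l) F $$ (i, s) * Ymat n $$ (s, j))"
    by (rule mult_entry) (use n in auto)
  also have "\<dots> = (if j + 1 < n then EE n (Suc l) F $$ (i, j + 1) * Ymat n $$ (j + 1, j) else 0)"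
    by (rule sum_single) (use n in \<open>auto simp add: Ymat_def\<close>)
  also have "\<dots> = EE n l (\<lambda>y. F (y - 2)) $$ (i, j)"
  proof (cases "j + 1 < n")
    case True
    have a: "alpha n (j + 1) - 2 = alpha n (j + 1 + 1)" by (simp add: alpha_def)
    show ?thesis using n True by (simp add: Ymat_def EE_index alpha_Suc)
  next
    case False
    then have "j + 1 = n" using n by simp
    then have a: "alpha n (j + 1) - 2 = alpha n (n + 1)" by (simp add: alpha_def)
    show ?thesis
    proof (cases "j = i + l")
      case True
      then have "alpha n (Suc (Suc (i + l))) = alpha n (Suc n)" using \<open>j + 1 = n\<close> by simp
      then show ?thesis using n False F0 True by (simp add: EE_index alpha_Suc[symmetric])
    qed (use n False in \<open>simp add: EE_index\<close>)
  qed
  finally show "(EE n (Suc l) F * Ymat n) $$ (i, j) = EE n l (\<lambda>y. F (y - 2)) $$ (i, j)" .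
qed auto

lemma EE_adY: "F (alpha n (Suc l)) = 0 \<Longrightarrow> F (alpha n (n + 1)) = 0 \<Longrightarrow>
  ad (Ymat n) (EE n (Suc l) F) = EE n l (\<lambda>y. F y - F (y - 2))"
  unfolding ad_def by (simp add: Y_EE EE_Y EE_minus)

definition Yp :: "nat \<Rightarrow> nat \<Rightarrow> real poly \<Rightarrow> real poly" where
  "Yp n l g = Tpoly n l * g - Tpoly n 0 * pcompose g [:-2, 1:]"

fun gseq :: "nat \<Rightarrow> nat \<Rightarrow> nat \<Rightarrow> real poly" where
  "gseq n k 0 = 1"
| "gseq n k (Suc m) = Yp n (k - m) (gseq n k m)"

lemma poly_Yp: "poly (Yp n l g) y = tt n l y * poly g y - tt n 0 y * poly g (y - 2)"
  by (simp add: Yp_def poly_T poly_pcompose)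

lemma poly_bwd: "poly (bwd_diff f) y = poly f y - poly f (y - 2)"
  by (simp add: bwd_diff_def poly_pcompose)

lemma poly_fwd: "poly (fwd_diff f) y = poly f (y + 2) - poly f y"
  by (simp add: fwd_diff_def poly_pcompose add.commute)

lemma adY_M: "ad (Ymat n) (EE n (Suc l) (\<lambda>y. PP n (Suc l) y * G y))
   = EE n l (\<lambda>y. PP n l y * (tt n (Suc l) y * G y - tt n 0 y * G (y - 2)))"
proof -
  have "ad (Ymat n) (EE n (Suc l) (\<lambda>y. PP n (Suc l) y * G y))
      = EE n l (\<lambda>y. PP n (Suc l) y * G y - PP n (Suc l) (y - 2) * G (y - 2))"
    by (rule EE_adY) (use PP_alpha_zero1[of "Suc l" n] PP_alpha_zero2[of "Suc l" n] in simp_all)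
  also have "(\<lambda>y. PP n (Suc l) y * G y - PP n (Suc l) (y - 2) * G (y - 2))
     = (\<lambda>y. PP n l y * (tt n (Suc l) y * G y - tt n 0 y * G (y - 2)))"
    by (rule ext) (simp only: PP_Suc'', simp add: PP_Suc algebra_simps)
  finally show ?thesis .
qed

lemma adY_iter: "m \<le> k \<Longrightarrow> (ad (Ymat n) ^^ m) (Xmat n ^\<^sub>m k)
   = EE n (k - m) (\<lambda>y. PP n (k - m) y * poly (gseq n k m) y)"
proof (induction m)
  case 0
  then show ?case by (simp add: Xpow)
next
  case (Suc m)
  then have km: "k - m = Suc (k - Suc m)" by simp
  have "(ad (Ymat n) ^^ Suc m) (Xmat n ^\<^sub>m k) = ad (Ymat n) ((ad (Ymat n) ^^ m) (Xmat n ^\<^sub>m k))"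
    by simp
  also have "\<dots> = ad (Ymat n) (EE n (Suc (k - Suc m)) (\<lambda>y. PP n (Suc (k - Suc m)) y * poly (gseq n k m) y))"
    using Suc by (simp add: km)
  also have "\<dots> = EE n (k - Suc m) (\<lambda>y. PP n (k - Suc m) y * poly (gseq n k (Suc m)) y)"
    unfolding adY_M by (simp add: poly_Yp km)
  finally show ?case .
qed

lemma prod_rel: "m \<le> k \<Longrightarrow> (\<Prod>j\<in>{1..k - m}. Tpoly n j) * gseq n k m = (bwd_diff ^^ m) (\<Prod>j\<in>{1..k}. Tpoly n j)"
proof (induction m)
  case 0
  then show ?case by simp
next
  case (Suc m)
  then have km: "k - m = Suc (k - Suc m)" by simp
  have "poly ((\<Prod>j\<in>{1..k - Suc m}. Tpoly n j) * gseq n k (Suc m)) y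
      = poly ((bwd_diff ^^ Suc m) (\<Prod>j\<in>{1..k}. Tpoly n j)) y" for y
  proof -
    have IH: "poly ((bwd_diff ^^ m) (\<Prod>j\<in>{1..k}. Tpoly n j)) z = PP n (Suc (k - Suc m)) z * poly (gseq n k m) z" for z
    proof -
      have "(bwd_diff ^^ m) (\<Prod>j\<in>{1..k}. Tpoly n j) = (\<Prod>j\<in>{1..k - m}. Tpoly n j) * gseq n k m"
        using Suc by simp
      then show ?thesis by (simp only: poly_mult poly_PT km)
    qed
    show ?thesis
      by (simp only: poly_mult poly_PT gseq.simps poly_Yp km poly_bwd funpow.simps o_apply IH PP_Suc'' diff_Suc_Suc) (simp add: PP_Suc algebra_simps)
  qed
  then show ?case by (simp add: poly_eq_poly_eq_iff[symmetric] fun_eq_iff)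
qed

lemma Tpoly_explicit: "Tpoly n j = [: ((real n)^2 - (2 * real j - 1)^2) / 4, - (2 * real j - 1) / 2, - 1 / 4 :]"
proof -
  have "poly (Tpoly n j) y = poly [: ((real n)^2 - (2 * real j - 1)^2) / 4, - (2 * real j - 1) / 2, - 1 / 4 :] y" for y
    by (simp add: poly_T tt_def power2_eq_square field_simps) algebra
  then show ?thesis by (simp add: poly_eq_poly_eq_iff[symmetric] fun_eq_iff)
qed

lemma degree_T: "degree (Tpoly n j) = 2" by (simp add: Tpoly_explicit)
lemma coeff_T2: "coeff (Tpoly n j) 2 = - 1 / 4" by (simp add: Tpoly_explicit numeral_2_eq_2)

lemma degree_Yp: "degree (Yp n l g) \<le> degree g + 1"
proof (cases "g = 0")
  case True
  then show ?thesis by (simp add: Yp_def)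
next
  case False
  let ?d = "degree g"
  let ?h = "pcompose g [:-2, 1:]"
  have dh: "degree ?h = ?d" by (simp add: degree_pcompose)
  have lh: "coeff ?h ?d = coeff g ?d" using lead_coeff_comp[of "[:-2, 1:]" g] dh by simp
  have d1: "degree (Tpoly n l * g) \<le> ?d + 2" using degree_mult_le[of "Tpoly n l" g] by (simp add: degree_T)
  have d2: "degree (Tpoly n 0 * ?h) \<le> ?d + 2" using degree_mult_le[of "Tpoly n 0" ?h] by (simp add: degree_T dh)
  have c1: "coeff (Tpoly n l * g) (?d + 2) = - 1 / 4 * coeff g ?d"
    using coeff_mult_degree_sum[of "Tpoly n l" g] by (simp add: degree_T coeff_T2 add.commute)
  have c2: "coeff (Tpoly n 0 * ?h) (?d + 2) = - 1 / 4 * coeff g ?d"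
    using coeff_mult_degree_sum[of "Tpoly n 0" ?h] by (simp add: degree_T coeff_T2 dh lh add.commute)
  show ?thesis
  proof (rule degree_le, intro allI impI)
    fix i assume i: "?d + 1 < i"
    show "coeff (Yp n l g) i = 0"
    proof (cases "i = ?d + 2")
      case True
      then show ?thesis using c1 c2 by (simp add: Yp_def)
    next
      case False
      then have "i > ?d + 2" using i by simp
      then show ?thesis using d1 d2 by (simp add: Yp_def coeff_eq_0)
    qed
  qed
qed

lemma degree_gseq: "degree (gseq n k m) \<le> m"
proof (induction m)
  case 0 then show ?case by simp
next
  case (Suc m)
  then show ?case using degree_Yp[of n "k - m" "gseq n k m"] by simp
qed

lemma XpolyH: "Xmat n ^\<^sub>m l * polyH n f = EE n l (\<lambda>y. PP n l y * poly f y)"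
  by (simp add: Xpow EE_polyH)

lemma alpha_inj: "alpha n i = alpha n j \<Longrightarrow> i = j"
  by (simp add: alpha_def)

lemma zero_if_many_roots:
  fixes p :: "real poly"
  assumes "\<forall>x\<in>S. poly p x = 0" "degree p < card S"
  shows "p = 0"
proof (rule ccontr)
  assume p: "p \<noteq> 0"
  have "S \<subseteq> {x. poly p x = 0}" using assms(1) by auto
  then have "card S \<le> card {x. poly p x = 0}" using poly_roots_finite[OF p] by (rule card_mono[rotated])
  also have "\<dots> \<le> degree p" using card_poly_roots_bound[OF p] .
  finally show False using assms(2) by simp
qed

lemma card_alpha: "card (alpha n ` {l+1..n}) = n - l"
proof -
  have "inj_on (alpha n) {l+1..n}" by (auto intro: inj_onI alpha_inj)
  then show ?thesis by (simp add: card_image)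
qed

lemma fkl_eq:
  assumes "l \<le> k" "k < n"
  shows "fkl n k l = gseq n k (k - l)"
  unfolding fkl_def
proof (rule the_equality)
  have kl: "k - (k - l) = l" using assms by simp
  show "degree (gseq n k (k - l)) < n - l \<and>
    (ad (Ymat n) ^^ (k - l)) (Xmat n ^\<^sub>m k) = Xmat n ^\<^sub>m l * polyH n (gseq n k (k - l))"
  proof
    show "degree (gseq n k (k - l)) < n - l" using degree_gseq[of n k "k - l"] assms by simp
    show "(ad (Ymat n) ^^ (k - l)) (Xmat n ^\<^sub>m k) = Xmat n ^\<^sub>m l * polyH n (gseq n k (k - l))"
      using adY_iter[of "k - l" k n] by (simp add: kl XpolyH)
  qed
  fix f assume f: "degree f < n - l \<and> (ad (Ymat n) ^^ (k - l)) (Xmat n ^\<^sub>m k) = Xmat n ^\<^sub>m l * polyH n f"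
  then have "EE n l (\<lambda>y. PP n l y * poly (gseq n k (k - l)) y) = EE n l (\<lambda>y. PP n l y * poly f y)"
    using adY_iter[of "k - l" k n] by (simp add: kl XpolyH)
  then have eq: "\<forall>i\<in>{l+1..n}. PP n l (alpha n i) * poly (gseq n k (k - l)) (alpha n i) = PP n l (alpha n i) * poly f (alpha n i)"
    by (simp add: EE_eq_iff)
  have "f - gseq n k (k - l) = 0"
  proof (rule zero_if_many_roots[where S = "alpha n ` {l+1..n}"])
    show "\<forall>x\<in>alpha n ` {l+1..n}. poly (f - gseq n k (k - l)) x = 0"
    proof
      fix x assume "x \<in> alpha n ` {l+1..n}"
      then obtain i where i: "i \<in> {l+1..n}" "x = alpha n i" by auto
      have pos: "PP n l (alpha n i) > 0" using i by (intro PP_alpha_pos) auto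
      have "PP n l (alpha n i) * poly (gseq n k (k - l)) (alpha n i) = PP n l (alpha n i) * poly f (alpha n i)"
        using bspec[OF eq i(1)] .
      then show "poly (f - gseq n k (k - l)) x = 0" using pos i by simp
    qed
    have "degree (f - gseq n k (k - l)) \<le> max (degree f) (degree (gseq n k (k - l)))"
      by (rule degree_diff_le_max)
    also have "\<dots> < n - l" using f degree_gseq[of n k "k - l"] assms by simp
    finally show "degree (f - gseq n k (k - l)) < card (alpha n ` {l+1..n})" unfolding card_alpha .
  qed
  then show "f = gseq n k (k - l)" by simp
qed

lemma ident1:
  fixes y a b c d :: real and n k l :: nat
  shows "tt n 0 y * (((tt n l (y + 2) * a - tt n 0 (y + 2) * b) - (tt n l y * b - tt n 0 y * c))
        - ((tt n l y * b - tt n 0 y * c) - (tt n l (y - 2) * c - tt n 0 (y - 2) * d)))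
     - (real l - 1 + 1) * (real l - 1 + y) * ((tt n l (y + 2) * a - tt n 0 (y + 2) * b) - (tt n l y * b - tt n 0 y * c))
     + (real k - (real l - 1)) * (real k + (real l - 1) + 1) * (tt n l y * b - tt n 0 y * c)
   = tt n l y * (tt n 0 y * ((a - b) - (b - c)) - (real l + 1) * (real l + y) * (a - b) + (real k - real l) * (real k + real l + 1) * b)
     - tt n 0 y * (tt n 0 (y - 2) * ((b - c) - (c - d)) - (real l + 1) * (real l + (y - 2)) * (b - c) + (real k - real l) * (real k + real l + 1) * c)"
proof -
  define N where "N = real n"
  define L where "L = real l"
  define K where "K = real k"
  define T where "T = (\<lambda>j x. (N * N - (x + 2 * j - 1) * (x + 2 * j - 1)))"
  have h: "T 0 y * (((T L (y + 2) * a - T 0 (y + 2) * b) - (T L y * b - T 0 y * c))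
        - ((T L y * b - T 0 y * c) - (T L (y - 2) * c - T 0 (y - 2) * d)))
     - 4 * (L - 1 + 1) * (L - 1 + y) * ((T L (y + 2) * a - T 0 (y + 2) * b) - (T L y * b - T 0 y * c))
     + 4 * (K - (L - 1)) * (K + (L - 1) + 1) * (T L y * b - T 0 y * c)
   = T L y * (T 0 y * ((a - b) - (b - c)) - 4 * (L + 1) * (L + y) * (a - b) + 4 * (K - L) * (K + L + 1) * b)
     - T 0 y * (T 0 (y - 2) * ((b - c) - (c - d)) - 4 * (L + 1) * (L + (y - 2)) * (b - c) + 4 * (K - L) * (K + L + 1) * c)"
    unfolding T_def by (simp add: algebra_simps)
  have tT: "tt n j x = T (real j) x / 4" for j x unfolding tt_def T_def N_def by (simp add: power2_eq_square)
  show ?thesis using h unfolding tT N_def L_def K_def by (simp add: field_simps)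
qed

definition DEq :: "nat \<Rightarrow> nat \<Rightarrow> nat \<Rightarrow> real poly \<Rightarrow> real poly" where
  "DEq n k l f = Tpoly n 0 * bwd_diff (fwd_diff f)
              - smult (real (l + 1)) ([:real l, 1:] * fwd_diff f)
              + smult (real (k - l) * real (k + l + 1)) f"

lemma poly_DEq: "l \<le> k \<Longrightarrow> poly (DEq n k l f) y = tt n 0 y * ((poly f (y + 2) - poly f y) - (poly f y - poly f (y - 2)))
   - (real l + 1) * (real l + y) * (poly f (y + 2) - poly f y) + (real k - real l) * (real k + real l + 1) * poly f y"
  by (simp add: DEq_def poly_T poly_bwd poly_fwd of_nat_diff algebra_simps)

lemma DEq_gseq: "m \<le> k \<Longrightarrow> DEq n k (k - m) (gseq n k m) = 0"
proof (induction m)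
  case 0
  have "poly (DEq n k k 1) y = 0" for y by (simp add: poly_DEq)
  then show ?case by (simp add: poly_eq_poly_eq_iff[symmetric] fun_eq_iff)
next
  case (Suc m)
  define l where "l = k - m"
  have l1: "1 \<le> l" "l \<le> k" "k - Suc m = l - 1" using Suc.prems by (auto simp: l_def)
  have IH: "poly (DEq n k l (gseq n k m)) y = 0" for y using Suc by (simp add: l_def)
  define g where "g = gseq n k m"
  have rl: "real (l - 1) = real l - 1" using l1 by (simp add: of_nat_diff)
  have "poly (DEq n k (l - 1) (Yp n l g)) y = tt n l y * poly (DEq n k l g) y - tt n 0 y * poly (DEq n k l g) (y - 2)" for y
  proof -
    have e: "y - 2 + 2 = y" "y + 2 - 2 = y" "y - 2 - 2 = y - 4" by simp_all
    have L: "poly (DEq n k (l - 1) (Yp n l g)) y = tt n 0 y * ((poly (Yp n l g) (y + 2) - poly (Yp n l g) y) - (poly (Yp n l g) y - poly (Yp n l g) (y - 2)))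
      - (real l - 1 + 1) * (real l - 1 + y) * (poly (Yp n l g) (y + 2) - poly (Yp n l g) y) + (real k - (real l - 1)) * (real k + (real l - 1) + 1) * poly (Yp n l g) y"
      using poly_DEq[of "l - 1" k n "Yp n l g" y] l1 by (simp only: rl)
    have g2: "poly (Yp n l g) (y + 2) = tt n l (y + 2) * poly g (y + 2) - tt n 0 (y + 2) * poly g y"
      by (simp only: poly_Yp e)
    have g1: "poly (Yp n l g) y = tt n l y * poly g y - tt n 0 y * poly g (y - 2)"
      by (simp only: poly_Yp)
    have g0: "poly (Yp n l g) (y - 2) = tt n l (y - 2) * poly g (y - 2) - tt n 0 (y - 2) * poly g (y - 4)"
      by (simp only: poly_Yp e)
    have h0: "poly (DEq n k l g) y = tt n 0 y * ((poly g (y + 2) - poly g y) - (poly g y - poly g (y - 2)))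
      - (real l + 1) * (real l + y) * (poly g (y + 2) - poly g y) + (real k - real l) * (real k + real l + 1) * poly g y"
      by (rule poly_DEq[OF l1(2)])
    have h1: "poly (DEq n k l g) (y - 2) = tt n 0 (y - 2) * ((poly g y - poly g (y - 2)) - (poly g (y - 2) - poly g (y - 4)))
      - (real l + 1) * (real l + (y - 2)) * (poly g y - poly g (y - 2)) + (real k - real l) * (real k + real l + 1) * poly g (y - 2)"
      using poly_DEq[OF l1(2), of n g "y - 2"] by (simp only: e)
    show ?thesis unfolding L g2 g1 g0 h0 h1 by (rule ident1)
  qed
  then have "poly (DEq n k (l - 1) (Yp n l g)) y = 0" for y using IH by (simp add: g_def)
  then have z: "DEq n k (l - 1) (Yp n l g) = 0" by (simp add: poly_eq_poly_eq_iff[symmetric] fun_eq_iff)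
  have gs: "gseq n k (Suc m) = Yp n l g" by (simp add: l_def g_def)
  show ?case by (simp only: gs l1(3) z)
qed

lemma adX_M: "ad (Xmat n) (EE n l (\<lambda>y. PP n l y * G y)) = EE n (Suc l) (\<lambda>y. PP n (Suc l) y * (G y - G (y + 2)))"
proof -
  have "(\<lambda>y. tt n (Suc l) y * (PP n l y * G y) - PP n l (y + 2) * G (y + 2) * tt n 1 y)
      = (\<lambda>y. PP n (Suc l) y * (G y - G (y + 2)))"
  proof (rule ext)
    fix y
    have a: "PP n (Suc l) y * G y = tt n (Suc l) y * (PP n l y * G y)" by (simp add: PP_Suc)
    have b: "PP n (Suc l) y * G (y + 2) = PP n l (y + 2) * G (y + 2) * tt n 1 y" by (simp add: PP_Suc')
    show "tt n (Suc l) y * (PP n l y * G y) - PP n l (y + 2) * G (y + 2) * tt n 1 y = PP n (Suc l) y * (G y - G (y + 2))"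
      unfolding right_diff_distrib a b ..
  qed
  then show ?thesis unfolding EE_adX by simp
qed

lemma Omega_M: "Omega n (EE n l (\<lambda>y. PP n l y * G y)) = EE n l (\<lambda>y.
    2 * (PP n l y * (tt n (Suc l) y * (G y - G (y + 2)) - tt n 0 y * (G (y - 2) - G y)))
    + 1 / 2 * (2 * real l * (2 * real l * (PP n l y * G y))) + 2 * real l * (PP n l y * G y))"
  unfolding Omega_def adX_M adY_M EE_adH EE_smult EE_add by simp

lemma ident2:
  fixes P tz ts a b c y :: real and k l :: nat
  assumes "ts = tz - (real l + 1) * (y + real l)"
  shows "2 * (P * (ts * (b - a) - tz * (c - b))) + 1 / 2 * (2 * real l * (2 * real l * (P * b))) + 2 * real l * (P * b)
     - real (2 * k * (k + 1)) * (P * b)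
   = - 2 * P * (tz * ((a - b) - (b - c)) - (real l + 1) * (real l + y) * (a - b) + (real k - real l) * (real k + real l + 1) * b)"
  unfolding assms by (simp add: algebra_simps)

lemma tt_S0: "tt n (Suc l) y = tt n 0 y - (real l + 1) * (y + real l)"
  unfolding tt_def by (simp add: power2_eq_square field_simps)

lemma Omega_eigen:
  assumes "l \<le> k"
  shows "Omega n (EE n l (\<lambda>y. PP n l y * poly (gseq n k (k - l)) y))
       = real (2 * k * (k + 1)) \<cdot>\<^sub>m EE n l (\<lambda>y. PP n l y * poly (gseq n k (k - l)) y)"
proof -
  define g where "g = gseq n k (k - l)"
  have kl: "k - (k - l) = l" using assms by simp
  have D: "DEq n k l g = 0" using DEq_gseq[of "k - l" k n] assms by (simp add: kl g_def)
  have H: "tt n 0 y * ((poly g (y + 2) - poly g y) - (poly g y - poly g (y - 2)))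
   - (real l + 1) * (real l + y) * (poly g (y + 2) - poly g y) + (real k - real l) * (real k + real l + 1) * poly g y = 0" for y
    using poly_DEq[OF assms, of n g y] D by simp
  have key: "2 * (PP n l y * (tt n (Suc l) y * (poly g y - poly g (y + 2)) - tt n 0 y * (poly g (y - 2) - poly g y)))
      + 1 / 2 * (2 * real l * (2 * real l * (PP n l y * poly g y))) + 2 * real l * (PP n l y * poly g y)
      - real (2 * k * (k + 1)) * (PP n l y * poly g y) = 0" for y
      using ident2[where P="PP n l y" and tz="tt n 0 y" and ts="tt n (Suc l) y" and a="poly g (y + 2)"
          and b="poly g y" and c="poly g (y - 2)" and k=k and l=l and y=y, OF tt_S0] H[of y] by simp
  show ?thesis unfolding Omega_M EE_smult g_def[symmetric]
    apply (intro arg_cong[where f="EE n l"] ext)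
    subgoal for y using key[of y] by simp
    done
qed

lemma ad_carrier[simp]: "A \<in> carrier_mat n n \<Longrightarrow> B \<in> carrier_mat n n \<Longrightarrow> ad A B \<in> carrier_mat n n"
  by (simp add: ad_def minus_carrier_mat)

lemma mtrace_comm: "A \<in> carrier_mat n n \<Longrightarrow> B \<in> carrier_mat n n \<Longrightarrow> mtrace (A * B) = mtrace (B * A)"
proof -
  assume A: "A \<in> carrier_mat n n" and B: "B \<in> carrier_mat n n"
  have "mtrace (A * B) = (\<Sum>i<n. \<Sum>s<n. A $$ (i, s) * B $$ (s, i))"
    unfolding mtrace_def using A B by (auto intro!: sum.cong simp del: index_mult_mat(1) simp: mult_entry[OF A B])
  also have "\<dots> = (\<Sum>s<n. \<Sum>i<n. B $$ (s, i) * A $$ (i, s))"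
    by (subst sum.swap) (simp add: mult.commute)
  also have "\<dots> = mtrace (B * A)"
    unfolding mtrace_def using A B by (auto intro!: sum.cong simp del: index_mult_mat(1) simp: mult_entry[OF B A])
  finally show ?thesis .
qed

lemma mtrace_add: "A \<in> carrier_mat n n \<Longrightarrow> B \<in> carrier_mat n n \<Longrightarrow> mtrace (A + B) = mtrace A + mtrace B"
  unfolding mtrace_def by (simp add: sum.distrib)
lemma mtrace_minus: "A \<in> carrier_mat n n \<Longrightarrow> B \<in> carrier_mat n n \<Longrightarrow> mtrace (A - B) = mtrace A - mtrace B"
  unfolding mtrace_def by (simp add: sum_subtractf)
lemma mtrace_smult: "A \<in> carrier_mat n n \<Longrightarrow> mtrace (c \<cdot>\<^sub>m A) = c * mtrace A"
  unfolding mtrace_def by (simp add: sum_distrib_left)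

lemma ip_ad:
  assumes A: "A \<in> carrier_mat n n" and B: "B \<in> carrier_mat n n" and Z: "Z \<in> carrier_mat n n"
  shows "mtrace (ad Z A * B) = - mtrace (A * ad Z B)"
proof -
  have "ad Z A * B = Z * (A * B) - A * (Z * B)"
    unfolding ad_def using A B Z by (simp add: minus_mult_distrib_mat[where nr=n and n=n and nc=n])
  then have 1: "mtrace (ad Z A * B) = mtrace (A * (B * Z)) - mtrace (A * (Z * B))"
    using A B Z by (simp add: mtrace_minus[of _ n] mtrace_comm[of Z n "A * B"])
  have "A * ad Z B = A * (Z * B) - A * (B * Z)"
    unfolding ad_def using A B Z by (simp add: mult_minus_distrib_mat[where nr=n and n=n and nc=n])
  then have 2: "mtrace (A * ad Z B) = mtrace (A * (Z * B)) - mtrace (A * (B * Z))"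
    using A B Z by (simp add: mtrace_minus[of _ n])
  show ?thesis using 1 2 by simp
qed

lemma ad_ad:
  assumes A: "A \<in> carrier_mat n n" and B: "B \<in> carrier_mat n n" and C: "C \<in> carrier_mat n n"
  shows "ad A (ad B C) = A * (B * C) - A * (C * B) - (B * (C * A) - C * (B * A))"
  unfolding ad_def using A B C
  by (simp add: mult_minus_distrib_mat[where nr=n and n=n and nc=n] minus_mult_distrib_mat[where nr=n and n=n and nc=n])

lemma jacobi:
  assumes A: "A \<in> carrier_mat n n" and B: "B \<in> carrier_mat n n" and C: "C \<in> carrier_mat n n"
  shows "ad A (ad B C) - ad B (ad A C) = ad (ad A B) C"
proof -
  have e: "ad (ad A B) C = A * (B * C) - B * (A * C) - (C * (A * B) - C * (B * A))"
    unfolding ad_def using A B C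
    by (simp add: mult_minus_distrib_mat[where nr=n and n=n and nc=n] minus_mult_distrib_mat[where nr=n and n=n and nc=n])
  show ?thesis unfolding e ad_ad[OF A B C] ad_ad[OF B A C]
    by (rule eq_matI) (use A B C in \<open>simp_all\<close>)
qed

lemma XY_entry: "i < n \<Longrightarrow> j < n \<Longrightarrow> (Xmat n * Ymat n) $$ (i, j) = (if j = i \<and> i + 1 < n then real (i + 1) * (real n - real (i + 1)) else 0)"
proof -
  assume n: "i < n" "j < n"
  have "(Xmat n * Ymat n) $$ (i, j) = (if i + 1 < n then Xmat n $$ (i, i + 1) * Ymat n $$ (i + 1, j) else 0)"
    unfolding mult_entry[OF X_carrier Y_carrier n]
    by (rule sum_single) (use n in \<open>simp add: Xmat_def\<close>)
  then show ?thesis using n by (auto simp: Xmat_def Ymat_def)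
qed

lemma YX_entry: "i < n \<Longrightarrow> j < n \<Longrightarrow> (Ymat n * Xmat n) $$ (i, j) = (if j = i \<and> 1 \<le> i then real i * (real n - real i) else 0)"
proof -
  assume n: "i < n" "j < n"
  have "(Ymat n * Xmat n) $$ (i, j) = (if i - 1 < n then Ymat n $$ (i, i - 1) * Xmat n $$ (i - 1, j) else 0)"
    unfolding mult_entry[OF Y_carrier X_carrier n]
    by (rule sum_single) (use n in \<open>auto simp add: Ymat_def\<close>)
  then show ?thesis using n by (cases i) (auto simp: Xmat_def Ymat_def)
qed

lemma XY_comm: "ad (Xmat n) (Ymat n) = Hmat n"
proof (rule eq_matI)
  fix i j assume ij: "i < dim_row (Hmat n)" "j < dim_col (Hmat n)"
  then have n: "i < n" "j < n" by auto
  have "ad (Xmat n) (Ymat n) $$ (i, j) = (Xmat n * Ymat n) $$ (i, j) - (Ymat n * Xmat n) $$ (i, j)"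
    unfolding ad_def using n by simp
  also have "\<dots> = Hmat n $$ (i, j)"
  proof (cases "j = i")
    case True
    show ?thesis
    proof (cases "i + 1 < n")
      case True2: True
      show ?thesis
        unfolding XY_entry[OF n] YX_entry[OF n]
        by (cases "i = 0") (use n True True2 in \<open>auto simp: Hmat_def alpha_def algebra_simps\<close>)
    next
      case False
      then have nn: "n = i + 1" using n by simp
      show ?thesis unfolding XY_entry[OF n] YX_entry[OF n] using True False n
        by (cases "i = 0") (auto simp: Hmat_def alpha_def algebra_simps nn)
    qed
  next
    case False
    then show ?thesis unfolding XY_entry[OF n] YX_entry[OF n] using n by (simp add: Hmat_def)
  qed
  finally show "ad (Xmat n) (Ymat n) $$ (i, j) = Hmat n $$ (i, j)" .
qed (simp_all add: ad_def)

lemma Omega_carrier[simp]: "A \<in> carrier_mat n n \<Longrightarrow> Omega n A \<in> carrier_mat n n"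
  by (simp add: Omega_def)

lemma lin3:
  assumes P: "P \<in> carrier_mat n n" and Q: "Q \<in> carrier_mat n n" and R: "R \<in> carrier_mat n n" and B: "B \<in> carrier_mat n n"
  shows "mtrace ((a \<cdot>\<^sub>m P + b \<cdot>\<^sub>m Q + R) * B) = a * mtrace (P * B) + b * mtrace (Q * B) + mtrace (R * B)"
    "mtrace (B * (a \<cdot>\<^sub>m P + b \<cdot>\<^sub>m Q + R)) = a * mtrace (B * P) + b * mtrace (B * Q) + mtrace (B * R)"
proof -
  have "(a \<cdot>\<^sub>m P + b \<cdot>\<^sub>m Q + R) * B = (a \<cdot>\<^sub>m P + b \<cdot>\<^sub>m Q) * B + R * B"
    by (rule add_mult_distrib_mat[OF _ R B]) (use P Q in simp)
  also have "(a \<cdot>\<^sub>m P + b \<cdot>\<^sub>m Q) * B = (a \<cdot>\<^sub>m P) * B + (b \<cdot>\<^sub>m Q) * B"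
    by (rule add_mult_distrib_mat[where nr=n, OF _ _ B]) (use P Q in simp_all)
  also have "(a \<cdot>\<^sub>m P) * B = a \<cdot>\<^sub>m (P * B)" by (rule mult_smult_assoc_mat[OF P B])
  also have "(b \<cdot>\<^sub>m Q) * B = b \<cdot>\<^sub>m (Q * B)" by (rule mult_smult_assoc_mat[OF Q B])
  finally show "mtrace ((a \<cdot>\<^sub>m P + b \<cdot>\<^sub>m Q + R) * B) = a * mtrace (P * B) + b * mtrace (Q * B) + mtrace (R * B)"
    using P Q R B by (simp add: mtrace_add[of _ n] mtrace_smult[of _ n])
  have "B * (a \<cdot>\<^sub>m P + b \<cdot>\<^sub>m Q + R) = B * (a \<cdot>\<^sub>m P + b \<cdot>\<^sub>m Q) + B * R"
    by (rule mult_add_distrib_mat[OF B _ R]) (use P Q in simp)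
  also have "B * (a \<cdot>\<^sub>m P + b \<cdot>\<^sub>m Q) = B * (a \<cdot>\<^sub>m P) + B * (b \<cdot>\<^sub>m Q)"
    by (rule mult_add_distrib_mat[where nc=n, OF B]) (use P Q in simp_all)
  also have "B * (a \<cdot>\<^sub>m P) = a \<cdot>\<^sub>m (B * P)" by (rule mult_smult_distrib[OF B P])
  also have "B * (b \<cdot>\<^sub>m Q) = b \<cdot>\<^sub>m (B * Q)" by (rule mult_smult_distrib[OF B Q])
  finally show "mtrace (B * (a \<cdot>\<^sub>m P + b \<cdot>\<^sub>m Q + R)) = a * mtrace (B * P) + b * mtrace (B * Q) + mtrace (B * R)"
    using P Q R B by (simp add: mtrace_add[of _ n] mtrace_smult[of _ n])
qed

lemma self_adjoint:
  assumes A: "A \<in> carrier_mat n n" and B: "B \<in> carrier_mat n n"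
  shows "mtrace (Omega n A * B) = mtrace (A * Omega n B)"
proof -
  let ?X = "Xmat n" and ?Y = "Ymat n" and ?H = "Hmat n"
  have c: "?X \<in> carrier_mat n n" "?Y \<in> carrier_mat n n" "?H \<in> carrier_mat n n" by simp_all
  have L: "mtrace (Omega n A * B) = 2 * mtrace (ad ?Y (ad ?X A) * B) + 1/2 * mtrace (ad ?H (ad ?H A) * B) + mtrace (ad ?H A * B)"
    unfolding Omega_def by (rule lin3) (use A B in simp_all)
  have R: "mtrace (A * Omega n B) = 2 * mtrace (A * ad ?Y (ad ?X B)) + 1/2 * mtrace (A * ad ?H (ad ?H B)) + mtrace (A * ad ?H B)"
    unfolding Omega_def by (rule lin3) (use A B in simp_all)
  have l1: "mtrace (ad ?Y (ad ?X A) * B) = mtrace (A * ad ?X (ad ?Y B))"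
    using ip_ad[of "ad ?X A" n B ?Y] ip_ad[of A n "ad ?Y B" ?X] A B by simp
  have l2: "mtrace (ad ?H (ad ?H A) * B) = mtrace (A * ad ?H (ad ?H B))"
    using ip_ad[of "ad ?H A" n B ?H] ip_ad[of A n "ad ?H B" ?H] A B by simp
  have l3: "mtrace (ad ?H A * B) = - mtrace (A * ad ?H B)"
    using ip_ad[of A n B ?H] A B by simp
  have J: "ad ?X (ad ?Y B) = ad ?Y (ad ?X B) + ad ?H B"
  proof -
    have "ad ?X (ad ?Y B) - ad ?Y (ad ?X B) = ad ?H B" using jacobi[OF c(1) c(2) B] by (simp add: XY_comm)
    note D = this
    show ?thesis
    proof (rule eq_matI)
      fix i j assume "i < dim_row (ad ?Y (ad ?X B) + ad ?H B)" "j < dim_col (ad ?Y (ad ?X B) + ad ?H B)"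
      then have ij: "i < n" "j < n" using B by (auto simp: ad_def)
      have "(ad ?X (ad ?Y B) - ad ?Y (ad ?X B)) $$ (i, j) = ad ?H B $$ (i, j)" using D by simp
      then show "ad ?X (ad ?Y B) $$ (i, j) = (ad ?Y (ad ?X B) + ad ?H B) $$ (i, j)"
        using ij B by (simp add: ad_def)
    qed (use B in \<open>auto simp: ad_def\<close>)
  qed
  have l4: "mtrace (A * ad ?X (ad ?Y B)) = mtrace (A * ad ?Y (ad ?X B)) + mtrace (A * ad ?H B)"
    unfolding J using A B by (simp add: mult_add_distrib_mat[where nr=n and n=n and nc=n] mtrace_add[of _ n])
  show ?thesis using L R l1 l2 l3 l4 by simp
qed

lemma choose_step: "Suc K * (N choose Suc K) = (N - K) * (N choose K)"
  using binomial_absorption[of K N] binomial_absorb_comp[of N K] by simp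

lemma conv_choose: "(\<Sum>i\<le>M. (i choose a) * ((M - i) choose b)) = Suc M choose (a + b + 1)"
proof (induction b arbitrary: M)
  case 0
  then show ?case using sum_choose_upper[of a M] by simp
next
  case (Suc b)
  note IHb = Suc.IH
  show ?case
  proof (induction M)
    case 0
    then show ?case by simp
  next
    case (Suc M)
    have "(\<Sum>i\<le>Suc M. (i choose a) * ((Suc M - i) choose Suc b))
        = (\<Sum>i\<le>M. (i choose a) * ((Suc M - i) choose Suc b))"
      by simp
    also have "\<dots> = (\<Sum>i\<le>M. (i choose a) * ((M - i) choose b) + (i choose a) * ((M - i) choose Suc b))"
      by (rule sum.cong) (auto simp: Suc_diff_le algebra_simps)
    also have "\<dots> = (Suc M choose (a + b + 1)) + (Suc M choose (a + Suc b + 1))"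
      by (simp add: sum.distrib Suc.IH IHb)
    also have "\<dots> = Suc (Suc M) choose (a + Suc b + 1)" by (simp add: binomial_Suc_Suc)
    finally show ?case .
  qed
qed


declare binomial_Suc_Suc[simp del]

lemma prod_down: "1 \<le> i \<Longrightarrow> (\<Prod>j\<in>{1..k}. real i - real j) = fact k * real ((i - 1) choose k)"
proof (induction k)
  case 0 then show ?case by simp
next
  case (Suc k)
  have "(\<Prod>j\<in>{1..Suc k}. real i - real j) = fact k * real ((i - 1) choose k) * (real i - real (Suc k))"
    using Suc by (simp add: prod.nat_ivl_Suc' mult.commute)
  also have "\<dots> = fact (Suc k) * real ((i - 1) choose Suc k)"
  proof (cases "k \<le> i - 1")
    case True
    have h: "real (Suc k) * real ((i - 1) choose Suc k) = real (i - 1 - k) * real ((i - 1) choose k)"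
      by (metis choose_step of_nat_mult)
    have r: "real (i - 1 - k) = real i - 1 - real k" using True Suc.prems by (simp add: of_nat_diff)
    have "fact (Suc k) * real ((i - 1) choose Suc k) = fact k * (real (Suc k) * real ((i - 1) choose Suc k))"
      by (simp add: algebra_simps)
    also have "\<dots> = fact k * ((real i - 1 - real k) * real ((i - 1) choose k))" unfolding h r ..
    finally show ?thesis by (simp add: algebra_simps)
  next
    case False
    then show ?thesis by (simp add: binomial_eq_0)
  qed
  finally show ?case .
qed

lemma prod_up: "(\<Prod>j\<in>{1..k}. real c + real j) = fact k * real ((c + k) choose k)"
proof (induction k)
  case 0 then show ?case by simp
next
  case (Suc k)
  have "(\<Prod>j\<in>{1..Suc k}. real c + real j) = fact k * real ((c + k) choose k) * (real c + real (Suc k))"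
    using Suc by (simp add: prod.nat_ivl_Suc' mult.commute)
  also have "\<dots> = fact (Suc k) * real ((c + Suc k) choose Suc k)"
  proof -
    have "Suc k * (Suc (c + k) choose Suc k) = Suc (c + k) * ((c + k) choose k)" by (rule Suc_times_binomial)
    then have "real (Suc k) * real (Suc (c + k) choose Suc k) = real (Suc (c + k)) * real ((c + k) choose k)"
      by (metis of_nat_mult)
    moreover have "fact (Suc k) * real ((c + Suc k) choose Suc k) = fact k * (real (Suc k) * real (Suc (c + k) choose Suc k))"
      by (simp only: fact_Suc add_Suc_right) (simp add: algebra_simps)
    ultimately show ?thesis by (simp add: algebra_simps)
  qed
  finally show ?case .
qed

lemma PP_alpha_choose: "1 \<le> i \<Longrightarrow> i \<le> n \<Longrightarrow> PP n k (alpha n i) = (fact k)^2 * real ((i - 1) choose k) * real ((n - i + k) choose k)"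
proof -
  assume i: "1 \<le> i" "i \<le> n"
  have "PP n k (alpha n i) = (\<Prod>j\<in>{1..k}. real i - real j) * (\<Prod>j\<in>{1..k}. real (n - i) + real j)"
    unfolding PP_def tt_alpha prod.distrib[symmetric] using i by (intro prod.cong) (auto simp: of_nat_diff)
  also have "\<dots> = (fact k)^2 * real ((i - 1) choose k) * real ((n - i + k) choose k)"
    by (simp only: prod_down[OF i(1)] prod_up) (simp add: power2_eq_square)
  finally show ?thesis .
qed

lemma sum_choose_prod:
  assumes "k < n"
  shows "(\<Sum>i\<in>{k+1..n}. ((i - 1) choose k) * ((n - i + k) choose k)) = (n + k) choose (2 * k + 1)"
proof -
  define M where "M = n + k - 1"
  have "(\<Sum>i\<in>{k+1..n}. ((i - 1) choose k) * ((n - i + k) choose k))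
      = (\<Sum>i\<in>{Suc k..Suc (n - 1)}. ((i - 1) choose k) * ((n - i + k) choose k))"
    using assms by simp
  also have "\<dots> = (\<Sum>t\<in>{k..n - 1}. (t choose k) * ((M - t) choose k))"
    unfolding sum.shift_bounds_cl_Suc_ivl using assms
    by (intro sum.cong) (auto simp: M_def)
  also have "\<dots> = (\<Sum>t\<le>M. (t choose k) * ((M - t) choose k))"
  proof (rule sum.mono_neutral_left)
    show "finite {..M}" by simp
    show "{k..n - 1} \<subseteq> {..M}" using assms by (auto simp: M_def)
    show "\<forall>i\<in>{..M} - {k..n - 1}. (i choose k) * ((M - i) choose k) = 0"
      using assms by (auto simp: M_def binomial_eq_0)
  qed
  also have "\<dots> = Suc M choose (k + k + 1)" by (rule conv_choose)
  also have "\<dots> = (n + k) choose (2 * k + 1)" using assms by (simp add: M_def mult_2)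
  finally show ?thesis .
qed

lemma prod_sq: "k < n \<Longrightarrow> real n * (\<Prod>j\<in>{1..k}. (real n)^2 - (real j)^2) = fact (2 * k + 1) * real ((n + k) choose (2 * k + 1))"
proof (induction k)
  case 0 then show ?case by simp
next
  case (Suc k)
  then have IH: "real n * (\<Prod>j\<in>{1..k}. (real n)^2 - (real j)^2) = fact (2 * k + 1) * real ((n + k) choose (2 * k + 1))"
    by simp
  have e3: "2 * k + 3 = Suc (2 * k + 2)" "2 * k + 2 = Suc (2 * k + 1)" by simp_all
  have c1: "(2 * k + 3) * ((n + k + 1) choose (2 * k + 3)) = (n + k + 1) * ((n + k) choose (2 * k + 2))"
    unfolding e3(1) using binomial_absorption[of "2 * k + 2" "n + k + 1"] by simp
  have c2: "(2 * k + 2) * ((n + k) choose (2 * k + 2)) = (n - k - 1) * ((n + k) choose (2 * k + 1))"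
    unfolding e3(2) using choose_step[of "2 * k + 1" "n + k"] by simp
  have "(2 * k + 3) * ((2 * k + 2) * ((n + k + 1) choose (2 * k + 3)))
      = (2 * k + 2) * ((2 * k + 3) * ((n + k + 1) choose (2 * k + 3)))" by (simp only: mult.left_commute)
  also have "\<dots> = (n + k + 1) * ((2 * k + 2) * ((n + k) choose (2 * k + 2)))" unfolding c1 by (simp only: mult.left_commute)
  also have "\<dots> = (n + k + 1) * ((n - k - 1) * ((n + k) choose (2 * k + 1)))" unfolding c2 ..
  finally have "(2 * k + 3) * ((2 * k + 2) * ((n + k + 1) choose (2 * k + 3))) = (n + k + 1) * ((n - k - 1) * ((n + k) choose (2 * k + 1)))" .
  then have c: "real (2 * k + 3) * (real (2 * k + 2) * real ((n + k + 1) choose (2 * k + 3)))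
      = real (n + k + 1) * (real (n - k - 1) * real ((n + k) choose (2 * k + 1)))"
    by (metis of_nat_mult)
  have nk: "real (n - k - 1) = real n - real k - 1" using Suc.prems by (simp add: of_nat_diff)
  have f: "fact (2 * k + 3) = (fact (2 * k + 1) :: real) * real (2 * k + 2) * real (2 * k + 3)"
  proof -
    have "2 * k + 3 = Suc (Suc (2 * k + 1))" by simp
    then show ?thesis by (simp only: fact_Suc) (simp add: algebra_simps)
  qed
  have "real n * (\<Prod>j\<in>{1..Suc k}. (real n)^2 - (real j)^2) = real n * (\<Prod>j\<in>{1..k}. (real n)^2 - (real j)^2) * ((real n)^2 - (real (Suc k))^2)"
    by (simp add: prod.nat_ivl_Suc' algebra_simps)
  also have "\<dots> = fact (2 * k + 1) * real ((n + k) choose (2 * k + 1)) * ((real n + real k + 1) * (real n - real k - 1))"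
    unfolding IH by (simp add: power2_eq_square algebra_simps)
  also have "\<dots> = fact (2 * k + 1) * (real (n + k + 1) * (real (n - k - 1) * real ((n + k) choose (2 * k + 1))))"
    unfolding nk by (simp add: algebra_simps)
  also have "\<dots> = fact (2 * k + 1) * (real (2 * k + 3) * (real (2 * k + 2) * real ((n + k + 1) choose (2 * k + 3))))"
    unfolding c ..
  also have "\<dots> = fact (2 * Suc k + 1) * real ((n + Suc k) choose (2 * Suc k + 1))"
  proof -
    have e: "n + Suc k = n + k + 1" "2 * Suc k + 1 = 2 * k + 3" by simp_all
    show ?thesis unfolding e unfolding f by (simp only: mult.assoc mult.commute mult.left_commute)
  qed
  finally show ?case .
qed

lemma base_norm:
  assumes "k < n"
  shows "(\<Sum>i\<in>{k+1..n}. PP n k (alpha n i))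
     = (fact k)^2 / (fact (2 * k) * (2 * real k + 1)) * real n * (\<Prod>j\<in>{1..k}. (real n)^2 - (real j)^2)"
proof -
  have "(\<Sum>i\<in>{k+1..n}. PP n k (alpha n i)) = (\<Sum>i\<in>{k+1..n}. (fact k)^2 * real (((i - 1) choose k) * ((n - i + k) choose k)))"
    by (intro sum.cong) (auto simp: PP_alpha_choose)
  also have "\<dots> = (fact k)^2 * real ((n + k) choose (2 * k + 1))"
    by (simp only: sum_distrib_left[symmetric] of_nat_sum[symmetric] sum_choose_prod[OF assms])
  also have "\<dots> = (fact k)^2 / fact (2 * k + 1) * (real n * (\<Prod>j\<in>{1..k}. (real n)^2 - (real j)^2))"
    unfolding prod_sq[OF assms] by simp
  also have "\<dots> = (fact k)^2 / (fact (2 * k) * (2 * real k + 1)) * real n * (\<Prod>j\<in>{1..k}. (real n)^2 - (real j)^2)"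
    by (simp add: algebra_simps)
  finally show ?thesis .
qed

lemma sbp:
  fixes a b :: "nat \<Rightarrow> real"
  assumes "l \<le> n" "a l = 0" "a (Suc n) = 0"
  shows "(\<Sum>i\<in>{l..n}. a i * b i) - (\<Sum>i\<in>{l..n}. a (Suc i) * b i) = (\<Sum>i\<in>{Suc l..n}. a i * (b i - b (i - 1)))"
proof -
  have S1: "(\<Sum>i\<in>{l..n}. a i * b i) = (\<Sum>i\<in>{Suc l..n}. a i * b i)"
    using sum.atLeast_Suc_atMost[OF assms(1), of "\<lambda>i. a i * b i"] assms(2) by simp
  have "(\<Sum>i\<in>{l..n}. a (Suc i) * b i) = (\<Sum>i\<in>{Suc l..Suc n}. a i * b (i - 1))"
    unfolding sum.shift_bounds_cl_Suc_ivl by simp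
  also have "\<dots> = (\<Sum>i\<in>{Suc l..n}. a i * b (i - 1))"
    using assms by simp
  finally have S2: "(\<Sum>i\<in>{l..n}. a (Suc i) * b i) = (\<Sum>i\<in>{Suc l..n}. a i * b (i - 1))" .
  show ?thesis unfolding S1 S2 by (simp add: sum_subtractf[symmetric] right_diff_distrib)
qed

lemma ipl_PP: "ipl n l f g = (\<Sum>i\<in>{l+1..n}. poly f (alpha n i) * poly g (alpha n i) * PP n l (alpha n i))"
  by (simp add: ipl_def poly_T PP_def)

lemma alpha_pred: "1 \<le> i \<Longrightarrow> alpha n (i - 1) = alpha n i + 2"
  by (simp add: alpha_def of_nat_diff)
lemma alpha_pred': "1 \<le> i \<Longrightarrow> alpha n (i - Suc 0) = alpha n i + 2"
  by (simp add: alpha_def of_nat_diff)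

lemma ipl_Yp:
  assumes l: "1 \<le> l" "l \<le> n"
  shows "ipl n (l - 1) (Yp n l g) h = (\<Sum>i\<in>{l+1..n}. poly g (alpha n i) * (poly h (alpha n i) - poly h (alpha n i + 2)) * PP n l (alpha n i))"
proof -
  define a where "a i = PP n l (alpha n i) * poly g (alpha n i)" for i
  define b where "b i = poly h (alpha n i)" for i
  have ll: "Suc (l - 1) = l" using l by simp
  have "ipl n (l - 1) (Yp n l g) h = (\<Sum>i\<in>{l..n}. (a i - a (Suc i)) * b i)"
    unfolding ipl_PP
  proof (rule sum.cong)
    show "{l - 1 + 1..n} = {l..n}" using l by simp
    fix i assume "i \<in> {l..n}"
    have p1: "tt n l (alpha n i) * PP n (l - 1) (alpha n i) = PP n l (alpha n i)"
      using PP_Suc[of n "l - 1" "alpha n i"] unfolding ll by simp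
    have p2: "tt n 0 (alpha n i) * PP n (l - 1) (alpha n i) = PP n l (alpha n (Suc i))"
      using PP_Suc''[of n "l - 1" "alpha n i"] unfolding ll alpha_Suc by simp
    show "poly (Yp n l g) (alpha n i) * poly h (alpha n i) * PP n (l - 1) (alpha n i) = (a i - a (Suc i)) * b i"
      unfolding poly_Yp a_def b_def alpha_Suc using p1 p2 by (simp add: algebra_simps alpha_Suc)
  qed
  also have "\<dots> = (\<Sum>i\<in>{l..n}. a i * b i) - (\<Sum>i\<in>{l..n}. a (Suc i) * b i)"
    by (simp add: sum_subtractf[symmetric] left_diff_distrib)
  also have "\<dots> = (\<Sum>i\<in>{Suc l..n}. a i * (b i - b (i - 1)))"
  proof (rule sbp)
    show "l \<le> n" by (rule l(2))
    show "a l = 0" unfolding a_def using PP_alpha_zero1[OF l(1)] by simp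
    show "a (Suc n) = 0" unfolding a_def using PP_alpha_zero2[OF l(1), of n] by simp
  qed
  also have "\<dots> = (\<Sum>i\<in>{l+1..n}. poly g (alpha n i) * (poly h (alpha n i) - poly h (alpha n i + 2)) * PP n l (alpha n i))"
    by (intro sum.cong) (auto simp: a_def b_def alpha_pred' algebra_simps)
  finally show ?thesis .
qed

lemma ident3:
  fixes y a b c :: real and n k l :: nat
  shows "(tt n l y * b - tt n 0 y * c) - (tt n l (y + 2) * a - tt n 0 (y + 2) * b) - (real k + real l) * (real k - real l + 1) * b
    = - (tt n 0 y * ((a - b) - (b - c)) - (real l + 1) * (real l + y) * (a - b) + (real k - real l) * (real k + real l + 1) * b)"
  unfolding tt_def by (simp add: power2_eq_square field_simps)


lemma norm_rec:
  assumes l: "1 \<le> l" "l \<le> k" "k < n" and D: "DEq n k l g = 0"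
  shows "ipl n (l - 1) (Yp n l g) (Yp n l g) = (real k + real l) * (real k - real l + 1) * ipl n l g g"
proof -
  have H: "tt n 0 y * ((poly g (y + 2) - poly g y) - (poly g y - poly g (y - 2)))
   - (real l + 1) * (real l + y) * (poly g (y + 2) - poly g y) + (real k - real l) * (real k + real l + 1) * poly g y = 0" for y
    using poly_DEq[OF l(2), of n g y] D by simp
  have pt: "poly (Yp n l g) y - poly (Yp n l g) (y + 2) = (real k + real l) * (real k - real l + 1) * poly g y" for y
  proof -
    have "poly (Yp n l g) y - poly (Yp n l g) (y + 2) - (real k + real l) * (real k - real l + 1) * poly g y = 0"
      using ident3[of n l y "poly g y" "poly g (y - 2)" "poly g (y + 2)" k] H[of y] by (simp add: poly_Yp)
    then show ?thesis by simp
  qed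
  have "ipl n (l - 1) (Yp n l g) (Yp n l g) = (\<Sum>i\<in>{l+1..n}. poly g (alpha n i) * (poly (Yp n l g) (alpha n i) - poly (Yp n l g) (alpha n i + 2)) * PP n l (alpha n i))"
    using l by (intro ipl_Yp) auto
  also have "\<dots> = (\<Sum>i\<in>{l+1..n}. (real k + real l) * (real k - real l + 1) * (poly g (alpha n i) * poly g (alpha n i) * PP n l (alpha n i)))"
    by (intro sum.cong) (simp_all add: pt)
  also have "\<dots> = (real k + real l) * (real k - real l + 1) * ipl n l g g"
    unfolding ipl_PP by (simp add: sum_distrib_left)
  finally show ?thesis .
qed

definition NF :: "nat \<Rightarrow> nat \<Rightarrow> nat \<Rightarrow> real" where
  "NF n k l = fact (k - l) * (fact k)^2 / (fact (k + l) * (2 * real k + 1)) * real n * (\<Prod>j\<in>{1..k}. (real n)^2 - (real j)^2)"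

lemma NF_step: "1 \<le> l \<Longrightarrow> l \<le> k \<Longrightarrow> (real k + real l) * (real k - real l + 1) * NF n k l = NF n k (l - 1)"
proof -
  assume l: "1 \<le> l" "l \<le> k"
  have f1: "fact (k - (l - 1)) = (real k - real l + 1) * (fact (k - l) :: real)"
  proof -
    have "k - (l - 1) = Suc (k - l)" using l by simp
    then show ?thesis using l by (simp add: of_nat_diff)
  qed
  have f2: "fact (k + l) = (real k + real l) * (fact (k + (l - 1)) :: real)"
  proof -
    have "k + l = Suc (k + (l - 1))" using l by simp
    then show ?thesis by (simp only: fact_Suc) simp
  qed
  have pos: "real k + real l \<noteq> 0" using l by simp
  have nz: "fact (k + (l - 1)) * (2 * real k + 1) \<noteq> (0::real)" by simp
  have fr: "c * d * (X / (c * Y) * Z) = d * X / Y * Z" if "c \<noteq> 0" "Y \<noteq> 0" for c d X Y Z :: real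
    using that by (simp add: field_simps)
  have "(real k + real l) * (real k - real l + 1) * NF n k l
     = (real k + real l) * (real k - real l + 1) * ((fact (k - l) * (fact k)^2) / ((real k + real l) * (fact (k + (l - 1)) * (2 * real k + 1)))
       * (real n * (\<Prod>j\<in>{1..k}. (real n)^2 - (real j)^2)))"
    unfolding NF_def f2 by (simp only: mult.assoc)
  also have "\<dots> = (real k - real l + 1) * (fact (k - l) * (fact k)^2) / (fact (k + (l - 1)) * (2 * real k + 1))
       * (real n * (\<Prod>j\<in>{1..k}. (real n)^2 - (real j)^2))"
    by (rule fr[OF pos nz])
  also have "\<dots> = NF n k (l - 1)"
    unfolding NF_def f1 by (simp only: mult.assoc)
  finally show ?thesis .
qed

lemma norm_gseq: "m \<le> k \<Longrightarrow> k < n \<Longrightarrow> ipl n (k - m) (gseq n k m) (gseq n k m) = NF n k (k - m)"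
proof (induction m)
  case 0
  have "ipl n k 1 1 = (\<Sum>i\<in>{k+1..n}. PP n k (alpha n i))" unfolding ipl_PP by simp
  also have "\<dots> = NF n k k"
  proof -
    have kk: "k + k = 2 * k" by simp
    show ?thesis unfolding base_norm[OF 0(2)] NF_def kk by simp
  qed
  finally show ?case by simp
next
  case (Suc m)
  define l where "l = k - m"
  have l: "1 \<le> l" "l \<le> k" "k - Suc m = l - 1" using Suc.prems by (auto simp: l_def)
  have D: "DEq n k l (gseq n k m) = 0" using DEq_gseq[of m k n] Suc.prems by (simp add: l_def)
  have gs: "gseq n k (Suc m) = Yp n l (gseq n k m)" by (simp add: l_def)
  have IH: "ipl n l (gseq n k m) (gseq n k m) = NF n k l" using Suc by (simp add: l_def)
  show ?case unfolding gs l(3) norm_rec[OF l(1,2) Suc.prems(2) D] IH NF_step[OF l(1,2)] ..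
qed

lemma NF_pos: "l \<le> k \<Longrightarrow> k < n \<Longrightarrow> NF n k l > 0"
proof -
  assume kn: "l \<le> k" "k < n"
  have "(\<Prod>j\<in>{1..k}. (real n)^2 - (real j)^2) > 0"
  proof (rule prod_pos)
    fix j assume "j \<in> {1..k}"
    then have "real j < real n" using kn by simp
    moreover have "0 \<le> real j" by simp
    ultimately have "(real j)^2 < (real n)^2" by (rule power_strict_mono) simp
    then show "(real n)^2 - (real j)^2 > 0" by simp
  qed
  moreover have "real n > 0" using kn by simp
  moreover have "fact (k - l) * (fact k)^2 / (fact (k + l) * (2 * real k + 1)) > (0::real)"
    by (intro divide_pos_pos mult_pos_pos) simp_all
  ultimately show ?thesis unfolding NF_def by simp
qed

lemma zero_EE: "0\<^sub>m n n = EE n l (\<lambda>y. 0)"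
  by (rule eq_matI) (auto simp: EE_index)

theorem theorem8p2:
  fixes n :: nat
  assumes "n \<ge> 1"
  shows "(\<forall>A \<in> carrier_mat n n. \<forall>B \<in> carrier_mat n n.
            mtrace (Omega n A * B) = mtrace (A * Omega n B))
       \<and> (\<forall>k l. l \<le> k \<and> k \<le> n - 1 \<longrightarrow>
            Xmat n ^\<^sub>m l * polyH n (fkl n k l) \<noteq> 0\<^sub>m n n
          \<and> Omega n (Xmat n ^\<^sub>m l * polyH n (fkl n k l))
              = real (2 * k * (k + 1)) \<cdot>\<^sub>m (Xmat n ^\<^sub>m l * polyH n (fkl n k l))
          \<and> Tpoly n 0 * bwd_diff (fwd_diff (fkl n k l))
              - smult (real (l + 1)) ([:real l, 1:] * fwd_diff (fkl n k l))
              + smult (real (k - l) * real (k + l + 1)) (fkl n k l) = 0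
          \<and> fkl n k l * (\<Prod>j\<in>{1..l}. Tpoly n j)
              = (bwd_diff ^^ (k - l)) (\<Prod>j\<in>{1..k}. Tpoly n j)
          \<and> ipl n l (fkl n k l) (fkl n k l)
              = fact (k - l) * (fact k)^2 / (fact (k + l) * (2 * real k + 1))
                * real n * (\<Prod>j\<in>{1..k}. (real n)^2 - (real j)^2))"
proof (intro conjI allI impI ballI)
  fix A B :: "real mat" assume "A \<in> carrier_mat n n" "B \<in> carrier_mat n n"
  then show "mtrace (Omega n A * B) = mtrace (A * Omega n B)" by (rule self_adjoint)
next
  fix k l assume kl: "l \<le> k \<and> k \<le> n - 1"
  then have lk: "l \<le> k" and kn: "k < n" using assms by auto
  have kkl: "k - (k - l) = l" using lk by simp
  define g where "g = gseq n k (k - l)"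
  have f: "fkl n k l = g" unfolding g_def by (rule fkl_eq[OF lk kn])
  have M: "Xmat n ^\<^sub>m l * polyH n (fkl n k l) = EE n l (\<lambda>y. PP n l y * poly g y)"
    unfolding f by (rule XpolyH)
  have N: "ipl n l g g = NF n k l"
    using norm_gseq[of "k - l" k n] lk kn by (simp add: kkl g_def)
  show "ipl n l (fkl n k l) (fkl n k l)
      = fact (k - l) * (fact k)^2 / (fact (k + l) * (2 * real k + 1)) * real n * (\<Prod>j\<in>{1..k}. (real n)^2 - (real j)^2)"
    unfolding f N NF_def ..
  show "Xmat n ^\<^sub>m l * polyH n (fkl n k l) \<noteq> 0\<^sub>m n n"
  proof
    assume "Xmat n ^\<^sub>m l * polyH n (fkl n k l) = 0\<^sub>m n n"
    then have "EE n l (\<lambda>y. PP n l y * poly g y) = EE n l (\<lambda>y. 0)" unfolding M zero_EE[of n l] .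
    then have z: "\<forall>i\<in>{l+1..n}. PP n l (alpha n i) * poly g (alpha n i) = 0" by (simp add: EE_eq_iff)
    have "ipl n l g g = 0" unfolding ipl_PP
    proof (rule sum.neutral, rule ballI)
      fix i assume i: "i \<in> {l+1..n}"
      have "PP n l (alpha n i) * poly g (alpha n i) = 0" using bspec[OF z i] .
      then show "poly g (alpha n i) * poly g (alpha n i) * PP n l (alpha n i) = 0" by (simp add: algebra_simps)
    qed
    then show False using NF_pos[OF lk kn] N by simp
  qed
  show "Omega n (Xmat n ^\<^sub>m l * polyH n (fkl n k l)) = real (2 * k * (k + 1)) \<cdot>\<^sub>m (Xmat n ^\<^sub>m l * polyH n (fkl n k l))"
    unfolding M g_def by (rule Omega_eigen[OF lk])
  have D: "DEq n k l g = 0" using DEq_gseq[of "k - l" k n] lk by (simp add: kkl g_def)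
  then show "Tpoly n 0 * bwd_diff (fwd_diff (fkl n k l))
              - smult (real (l + 1)) ([:real l, 1:] * fwd_diff (fkl n k l))
              + smult (real (k - l) * real (k + l + 1)) (fkl n k l) = 0"
    unfolding f DEq_def .
  show "fkl n k l * (\<Prod>j\<in>{1..l}. Tpoly n j) = (bwd_diff ^^ (k - l)) (\<Prod>j\<in>{1..k}. Tpoly n j)"
    using prod_rel[of "k - l" k n] lk unfolding f g_def kkl by (simp add: mult.commute)
qed

end
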